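(* Let $m\equiv 2\pmod 4$ and $L=L'$. For $a\in\mathcal{R}$ the Lee weight of $ev(a)=(Tr(ax))_{x\in L'}$ is: (a) $0$ if $a=0$; (b) if $a=(u-1)^2a_3$ with $a_3\in\mathbb{F}_{3^m}$: $w_L(ev(a))=3^{3m}-3^{5m/2}$ when $a_3\in\mathcal{Q}$, and $w_L(ev(a))=3^{3m}+3^{5m/2}$ when $a_3\in\mathcal{N}$; (c) $w_L(ev(a))=3^{3m}-3^{2m}$ if $a\in\mathcal{R}\setminus\langle (u-1)^2\rangle$.
   Context: Let $R=\mathbb{F}_3[u]/(u^3-1)$ and $\mathcal{R}=\mathbb{F}_{3^m}[u]/(u^3-1)=\mathbb{F}_{3^m}+u\mathbb{F}_{3^m}+u^2\mathbb{F}_{3^m}$. Every element of $\mathcal{R}$ is uniquely $x_1+x_2(u-1)+x_3(u-1)^2$ with $x_i\in\mathbb{F}_{3^m}$; units are those with $x_1\neq0$. $\langle (u-1)^2\rangle=\{(u-1)^2a_3:a_3\in\mathbb{F}_{3^m}\}$. $Tr:\mathcal{R}\to R$ is $Tr(a+ub+u^2c)=tr(a)+u\,tr(b)+u^2tr(c)$, with $tr$ the absolute trace $\mathbb{F}_{3^m}\to\mathbb{F}_3$. $\mathcal{Q}$ and $\mathcal{N}$ denote the nonzero squares and the nonsquares of $\mathbb{F}_{3^m}$; $L'=\{x_1+x_2(u-1)+x_3(u-1)^2:x_1\in\mathcal{Q},x_2,x_3\in\mathbb{F}_{3^m}\}$. The Gray map $\phi:R\to\mathbb{F}_3^3$ is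 $\phi(a'+ub'+u^2c')=(a',b',c')$ ($a',b',c'\in\mathbb{F}_3$), extended coordinatewise to $R^n\to\mathbb{F}_3^{3n}$; the Lee weight $w_L(v)$ of $v\in R^n$ is the Hamming weight of $\phi(v)$. *)

theory Defs
  imports Main
begin

text \<open>Elements of the ring F[u]/(u^3-1) are represented as triples (a,b,c) standing for a + u b + u^2 c.\<close>
type_synonym 'a R3 = "'a \<times> 'a \<times> 'a"

definition radd :: "'a::comm_ring_1 R3 \<Rightarrow> 'a R3 \<Rightarrow> 'a R3" where
  "radd p q = (case p of (a,b,c) \<Rightarrow> case q of (x,y,z) \<Rightarrow> (a+x, b+y, c+z))"

definition rmul :: "'a::comm_ring_1 R3 \<Rightarrow> 'a R3 \<Rightarrow> 'a R3" where
  "rmul p q = (case p of (a,b,c) \<Rightarrow> case q of (x,y,z) \<Rightarrow>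
      (a*x + b*z + c*y, a*y + b*x + c*z, a*z + b*y + c*x))"

definition rconst :: "'a::comm_ring_1 \<Rightarrow> 'a R3" where
  "rconst x = (x, 0, 0)"

definition um1 :: "'a::comm_ring_1 R3" where
  "um1 = (-1, 1, 0)"

definition um1sq :: "'a::comm_ring_1 R3" where
  "um1sq = rmul um1 um1"

definition elem :: "'a::comm_ring_1 \<Rightarrow> 'a \<Rightarrow> 'a \<Rightarrow> 'a R3" where
  "elem x1 x2 x3 = radd (rconst x1) (radd (rmul (rconst x2) um1) (rmul (rconst x3) um1sq))"

definition Qset :: "'a::field set" where
  "Qset = {x. x \<noteq> 0 \<and> (\<exists>y. x = y^2)}"

definition Nset :: "'a::field set" where
  "Nset = {x. \<not> (\<exists>y. x = y^2)}"

definition Lprime :: "'a::field R3 set" where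
  "Lprime = {elem x1 x2 x3 | x1 x2 x3. x1 \<in> Qset}"

definition ideal_um1sq :: "'a::field R3 set" where
  "ideal_um1sq = {rmul um1sq (rconst a3) | a3. True}"

text \<open>Absolute trace F_{3^m} -> F_3; the value lies in the prime subfield of the field.\<close>
definition tr :: "nat \<Rightarrow> 'a::field \<Rightarrow> 'a" where
  "tr m x = (\<Sum>i<m. x ^ (3 ^ i))"

definition Tr :: "nat \<Rightarrow> 'a::field R3 \<Rightarrow> 'a R3" where
  "Tr m p = (case p of (a,b,c) \<Rightarrow> (tr m a, tr m b, tr m c))"

text \<open>Lee weight of an element of R = F_3[u]/(u^3-1): Hamming weight of its Gray image (a',b',c').\<close>
definition lee_wt :: "'a::zero R3 \<Rightarrow> nat" where
  "lee_wt p = (case p of (a,b,c) \<Rightarrow>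
      (if a = 0 then 0 else 1) + (if b = 0 then 0 else 1) + (if c = 0 then 0 else 1))"

definition wL_ev :: "nat \<Rightarrow> 'a::field R3 \<Rightarrow> nat" where
  "wL_ev m a = (\<Sum>x\<in>Lprime. lee_wt (Tr m (rmul a x)))"

end

theory Submission
  imports Defs "HOL-Computational_Algebra.Polynomial"
begin


lemma frob3: fixes x y :: "'a::comm_ring_1" assumes "(3::'a) = 0" shows "(x+y)^3 = x^3+y^3"
proof -
  have "(x+y)^3 = x^3+y^3 + 3*(x^2*y+x*y^2)" by (simp add: power3_eq_cube power2_eq_square algebra_simps)
  thus ?thesis using assms by simp
qed

lemma frobn: fixes x y :: "'a::comm_ring_1" assumes "(3::'a) = 0" shows "(x+y)^(3^n) = x^(3^n)+y^(3^n)"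
proof (induction n)
  case 0 then show ?case by simp
next
  case (Suc n)
  have "(x+y)^(3^Suc n) = ((x+y)^(3^n))^3" by (simp add: power_mult[symmetric] mult.commute)
  also have "\<dots> = (x^(3^n))^3 + (y^(3^n))^3" using Suc frob3[OF assms] by simp
  also have "\<dots> = x^(3^Suc n)+y^(3^Suc n)" by (simp add: power_mult[symmetric] mult.commute)
  finally show ?case .
qed

lemma frob_neg: fixes x :: "'a::comm_ring_1" shows "(-x)^(3^n) = -(x^(3^n))"
  by (simp add: power_minus_odd)

lemma frob_sum: fixes g :: "'b \<Rightarrow> 'a::comm_ring_1" assumes "(3::'a) = 0"
  shows "(\<Sum>i\<in>A. g i)^(3^n) = (\<Sum>i\<in>A. (g i)^(3^n))"
proof (cases "finite A")
  case True then show ?thesis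
    by (induction A rule: finite_induct) (auto simp: frobn[OF assms] power_0_left)
qed (simp add: power_0_left)

lemma tr_add: fixes x y :: "'a::field" assumes "(3::'a) = 0" shows "tr n (x+y) = tr n x + tr n y"
  unfolding tr_def by (simp add: frobn[OF assms] sum.distrib)

lemma tr_neg: fixes x :: "'a::field" shows "tr n (-x) = - tr n x"
  unfolding tr_def by (simp add: frob_neg sum_negf)

lemma tr_zero[simp]: "tr n (0::'a::field) = 0"
  unfolding tr_def by (simp add: power_0_left)

lemma tr_cube: fixes z :: "'a::field" assumes "(3::'a) = 0" and "z^(3^n) = z"
  shows "(tr n z)^3 = tr n z"
proof -
  have "(tr n z)^3 = (\<Sum>i<n. z^(3^(Suc i)))"
    unfolding tr_def using frob_sum[OF assms(1), of "\<lambda>i. z^(3^i)" "{..<n}" 1]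
    by (simp add: power_mult[symmetric] mult.commute)
  moreover have "tr (Suc n) z = z + (\<Sum>i<n. z^(3^(Suc i)))"
    unfolding tr_def by (subst sum.lessThan_Suc_shift) simp
  moreover have "tr (Suc n) z = tr n z + z^(3^n)" unfolding tr_def by simp
  ultimately show ?thesis using assms(2) by simp
qed

lemma fermat: fixes x :: "'a::{field,finite}" shows "x^(card (UNIV::'a set)) = x"
proof (cases "x = 0")
  case True then show ?thesis using card_gt_0_iff[of "UNIV::'a set"] by (simp add: power_0_left)
next
  case False
  let ?S = "UNIV - {0::'a}"
  have bij: "bij_betw (\<lambda>y. x*y) ?S ?S"
  proof (rule bij_betw_byWitness[of _ "\<lambda>y. y / x"])
    show "\<forall>a\<in>?S. x * a / x = a" using False by simp
    show "\<forall>a\<in>?S. x * (a / x) = a" using False by simp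
    show "(*) x ` ?S \<subseteq> ?S" using False by auto
    show "(\<lambda>y. y / x) ` ?S \<subseteq> ?S" using False by auto
  qed
  have e1: "(\<Prod>y\<in>?S. x*y) = (\<Prod>y\<in>?S. y)"
    using prod.reindex_bij_betw[OF bij, of "\<lambda>y. y"] by (simp only: comp_def)
  have e2: "(\<Prod>y\<in>?S. x*y) = x^(card ?S) * (\<Prod>y\<in>?S. y)"
    by (simp only: prod.distrib prod_constant)
  have e3: "(\<Prod>y\<in>?S. y) \<noteq> 0" by (metis (no_types, lifting) prod_zero_iff finite_Diff finite_UNIV DiffD2 singletonI)
  have "x^(card ?S) * (\<Prod>y\<in>?S. y) = 1 * (\<Prod>y\<in>?S. y)" using e1 e2 by simp
  then have "x^(card ?S) = 1" using e3 by (simp only: mult_cancel_right) blast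
  moreover have "card (UNIV::'a set) = Suc (card ?S)"
    by (rule card_Suc_Diff1[symmetric]) auto
  ultimately show ?thesis by (simp only: power_Suc mult_1_right)
qed

lemma fiber_count:
  fixes f :: "'a::ab_group_add \<Rightarrow> 'b::ab_group_add"
  assumes fin: "finite S" and cl: "\<And>x y. x\<in>S \<Longrightarrow> y\<in>S \<Longrightarrow> x+y \<in> S" and cln: "\<And>x. x\<in>S \<Longrightarrow> -x\<in>S"
    and hom: "\<And>x y. x\<in>S \<Longrightarrow> y\<in>S \<Longrightarrow> f(x+y) = f x + f y"
  shows "card S = card (f`S) * card {z\<in>S. f z = 0}"
proof -
  have S: "S = (\<Union>t\<in>f`S. {z\<in>S. f z = t})" by auto
  have "card S = (\<Sum>t\<in>f`S. card {z\<in>S. f z = t})"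
    by (subst S, rule card_UN_disjoint) (use fin in auto)
  also have "\<dots> = (\<Sum>t\<in>f`S. card {z\<in>S. f z = 0})"
  proof (rule sum.cong[OF refl])
    fix t assume "t \<in> f`S"
    then obtain x0 where x0: "x0 \<in> S" "t = f x0" by auto
    have z0: "f (-x0) = - f x0"
      using hom[OF x0(1) cln[OF x0(1)]] hom[OF cl[OF x0(1) cln[OF x0(1)]] cl[OF x0(1) cln[OF x0(1)]]]
      by (simp add: eq_neg_iff_add_eq_0 add.commute)
    have "{z\<in>S. f z = t} = (\<lambda>z. z + x0) ` {z\<in>S. f z = 0}"
    proof (rule set_eqI, rule iffI)
      fix y assume y: "y \<in> {z\<in>S. f z = t}"
      have yS: "y \<in> S" using y by auto
      have "y + - x0 \<in> S" by (rule cl[OF yS cln[OF x0(1)]])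
      moreover have "f (y + - x0) = 0"
      proof -
        have "y \<in> S" "f y = f x0" using y x0 by auto
        then show ?thesis using hom[OF \<open>y \<in> S\<close> cln[OF x0(1)]] z0 by simp
      qed
      ultimately have "y + - x0 \<in> {z\<in>S. f z = 0}" by auto
      moreover have "y = (y + - x0) + x0" by simp
      ultimately show "y \<in> (\<lambda>z. z + x0) ` {z\<in>S. f z = 0}" by blast
    next
      fix y assume "y \<in> (\<lambda>z. z + x0) ` {z\<in>S. f z = 0}"
      then obtain z where z: "z \<in> S" "f z = 0" "y = z + x0" by auto
      then show "y \<in> {z\<in>S. f z = t}" using cl[OF z(1) x0(1)] hom[OF z(1) x0(1)] x0(2) by simp
    qed
    moreover have "inj_on (\<lambda>z. z + x0) {z\<in>S. f z = 0}" by (auto simp: inj_on_def)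
    ultimately show "card {z\<in>S. f z = t} = card {z\<in>S. f z = 0}" by (simp add: card_image)
  qed
  also have "\<dots> = card (f`S) * card {z\<in>S. f z = 0}" by simp
  finally show ?thesis .
qed

lemma cube_roots: "card {t::'a::field. t^3 = t} \<le> 3"
proof -
  have sub: "{t::'a. t^3 = t} \<subseteq> {0,1,-1}"
  proof
    fix t :: 'a assume "t \<in> {t. t^3 = t}"
    then have "t * (t - 1) * (t + 1) = 0" by (simp add: algebra_simps power3_eq_cube)
    then show "t \<in> {0,1,-1}" by (auto simp: eq_neg_iff_add_eq_0)
  qed
  moreover have "card {0::'a,1,-1} \<le> 3" using card_length[of "[0::'a,1,-1]"] by simp
  moreover have "card {t::'a. t^3 = t} \<le> card {0::'a,1,-1}" by (rule card_mono[OF _ sub]) simp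
  ultimately show ?thesis by linarith
qed


lemma cube_sub: fixes t :: "'a::field" assumes "t^3 = t" shows "t \<in> {0,1,-1}"
proof -
  have "t * (t - 1) * (t + 1) = 0" using assms by (simp add: algebra_simps power3_eq_cube)
  then show ?thesis by (auto simp: eq_neg_iff_add_eq_0)
qed

lemma card3: "card {0::'a::field,1,-1} \<le> 3" using card_length[of "[0::'a,1,-1]"] by simp

lemma trace_poly_roots:
  assumes "n \<ge> 1"
  shows "finite {z::'a::field. tr n z = 0} \<and> card {z::'a. tr n z = 0} \<le> 3^(n-1)"
proof -
  define P :: "'a poly" where "P = (\<Sum>i<n. monom 1 (3^i))"
  have pv: "poly P z = tr n z" for z unfolding P_def tr_def by (simp add: poly_sum poly_monom)
  have dg: "degree P \<le> 3^(n-1)" unfolding P_def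
  proof (rule degree_sum_le)
    fix i assume "i \<in> {..<n}"
    then have "3^i \<le> (3::nat)^(n-1)" by (intro power_increasing) auto
    then show "degree (monom (1::'a) (3^i)) \<le> 3^(n-1)" using degree_monom_le order_trans by blast
  qed simp
  have "coeff P (3^(n-1)) = (\<Sum>i<n. if i = n - 1 then 1 else 0)"
    unfolding P_def coeff_sum coeff_monom by (intro sum.cong) auto
  also have "\<dots> = 1" using assms by simp
  finally have "P \<noteq> 0" by auto
  then have "finite {z. poly P z = 0}" "card {z. poly P z = 0} \<le> degree P"
    using poly_roots_finite card_poly_roots_bound by blast+
  then show ?thesis using dg pv by simp
qed

lemma trace_kernel:
  fixes S :: "'a::field set"
  assumes c3: "(3::'a)=0" and fin: "finite S" and cl: "\<And>x y. x\<in>S \<Longrightarrow> y\<in>S \<Longrightarrow> x+y\<in>S"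
    and cln: "\<And>x. x\<in>S \<Longrightarrow> -x\<in>S"
    and fr: "\<And>z. z\<in>S \<Longrightarrow> z^(3^n) = z" and cS: "card S = 3^n" and n: "n \<ge> 1"
  shows "card {z\<in>S. tr n z = 0} = 3^(n-1)"
proof -
  have fc: "card S = card (tr n ` S) * card {z\<in>S. tr n z = 0}"
    by (rule fiber_count[OF fin cl cln]) (simp_all add: tr_add[OF c3])
  have "tr n ` S \<subseteq> {0,1,-1}" using cube_sub tr_cube[OF c3 fr] by blast
  then have "card (tr n ` S) \<le> card {0::'a,1,-1}" by (rule card_mono[rotated]) simp
  then have I: "card (tr n ` S) \<le> 3" using card3[where 'a='a] by linarith
  have "{z\<in>S. tr n z = 0} \<subseteq> {z. tr n z = 0}" by auto
  then have K: "card {z\<in>S. tr n z = 0} \<le> 3^(n-1)"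
    using trace_poly_roots[OF n, where 'a='a] card_mono order_trans by metis
  have e: "(3::nat)^n = 3 * 3^(n-1)" using n by (simp add: power_eq_if)
  have "card (tr n ` S) * card {z\<in>S. tr n z = 0} \<le> 3 * card {z\<in>S. tr n z = 0}"
    using I by simp
  then have "3^(n-1) \<le> card {z\<in>S. tr n z = 0}" using fc cS e by linarith
  then show ?thesis using K by simp
qed


lemma char3: fixes dummy :: "'a::{field,finite}"
  assumes "card (UNIV::'a set) = 3^m" shows "(3::'a) = 0"
proof -
  have "(\<Sum>y\<in>(UNIV::'a set). y) = (\<Sum>y\<in>UNIV. y + 1)"
    by (rule sum.reindex_bij_witness[of _ "\<lambda>y. y + 1" "\<lambda>y. y - 1"]) auto
  also have "\<dots> = (\<Sum>y\<in>(UNIV::'a set). y) + of_nat (card (UNIV::'a set))"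
    by (simp add: sum.distrib)
  finally have "of_nat (card (UNIV::'a set)) = (0::'a)" by simp
  then have "(3::'a)^m = 0" using assms by simp
  then show ?thesis by simp
qed

lemma two_ne: "(3::'a::field) = 0 \<Longrightarrow> (2::'a) \<noteq> 0"
proof
  assume "(3::'a) = 0" "(2::'a) = 0"
  then have "(3::'a) - 2 = 0" by simp
  then show False by simp
qed

lemma sq_fiber:
  fixes x :: "'a::field" assumes c3: "(3::'a) = 0" and x: "x \<in> Qset"
  shows "card {y. y^2 = x} = 2"
proof -
  obtain y0 where y0: "x = y0^2" "x \<noteq> 0" using x unfolding Qset_def by auto
  then have "y0 \<noteq> 0" by auto
  have "y0 \<noteq> -y0"
  proof
    assume "y0 = -y0" then have "2*y0 = 0" by simp
    then show False using two_ne[OF c3] \<open>y0 \<noteq> 0\<close> by simp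
  qed
  have "{y. y^2 = x} = {y0, -y0}" using y0(1) by (auto simp: power2_eq_iff)
  then show ?thesis using \<open>y0 \<noteq> -y0\<close> by simp
qed

lemma sq_count:
  fixes P :: "'a::{field,finite} \<Rightarrow> bool" assumes c3: "(3::'a) = 0"
  shows "card {y::'a. y \<noteq> 0 \<and> P (y^2)} = 2 * card {x\<in>Qset. P x}"
proof -
  have e: "{y::'a. y \<noteq> 0 \<and> P (y^2)} = (\<Union>x\<in>{x\<in>Qset. P x}. {y. y^2 = x})"
    unfolding Qset_def by auto
  have "card (\<Union>x\<in>{x\<in>Qset. P x}. {y. y^2 = x}) = (\<Sum>x\<in>{x\<in>Qset. P x}. card {y. y^2 = x})"
    by (rule card_UN_disjoint) auto
  also have "\<dots> = (\<Sum>x\<in>{x\<in>Qset. P x}. 2)" using sq_fiber[OF c3] by (intro sum.cong) auto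
  finally show ?thesis using e by simp
qed

lemma Qcard:
  fixes dummy :: "'a::{field,finite}" assumes c3: "(3::'a) = 0"
  shows "2 * card (Qset::'a set) = card (UNIV::'a set) - 1"
proof -
  have "card {y::'a. y \<noteq> 0 \<and> True} = 2 * card {x\<in>(Qset::'a set). True}" by (rule sq_count[OF c3])
  moreover have "{y::'a. y \<noteq> 0 \<and> True} = UNIV - {0}" by auto
  moreover have "card (UNIV - {0::'a}) = card (UNIV::'a set) - 1" by (rule card_Diff_singleton) simp
  ultimately show ?thesis by simp
qed


lemma minus_one_sq:
  fixes dummy :: "'a::{field,finite}"
  assumes cq: "card (UNIV::'a set) = 3^(2*k)" and k: "k \<ge> 1"
  shows "(-1::'a) \<in> Qset"
proof -
  have c3: "(3::'a) = 0" using char3[OF cq] .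
  define q where "q = card (UNIV::'a set)"
  have q9: "q = 9^k" using cq unfolding q_def by (simp add: power_mult)
  have m4: "(9::nat)^k mod 4 = 1"
    by (induction k) (auto simp: mod_mult_right_eq[of 9, symmetric])
  define j where "j = q div 4"
  have j: "q = 4*j + 1" unfolding j_def using m4 q9 div_mult_mod_eq[of q 4] by simp
  have q9': "q \<ge> 9" using q9 power_increasing[of 1 k "9::nat"] k by simp
  define N where "N = 2*j"
  have "j \<ge> 1"
  proof (rule ccontr)
    assume "\<not> j \<ge> 1" then have "q = 1" using j by simp
    then show False using q9' by simp
  qed
  have QR: "Qset \<subseteq> {x::'a. x^N = 1}"
  proof
    fix x :: 'a assume "x \<in> Qset"
    then obtain y where y: "x = y^2" "y \<noteq> 0" unfolding Qset_def by auto
    have "y^q = y" unfolding q_def by (rule fermat)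
    then have "y * y^(q-1) = y * 1" using j by (simp add: power_eq_if)
    then have "y^(q-1) = 1" using y(2) by simp
    then show "x \<in> {x. x^N = 1}" using y j by (simp add: N_def power_mult[symmetric])
  qed
  define P :: "'a poly" where "P = monom 1 N + [:-1:]"
  have dP: "degree P = N" unfolding P_def using \<open>j \<ge> 1\<close> N_def by (subst degree_add_eq_left) (simp_all add: degree_monom_eq)
  have "P \<noteq> 0" using dP \<open>j \<ge> 1\<close> N_def by auto
  then have "card {x. poly P x = 0} \<le> N" using card_poly_roots_bound dP by metis
  moreover have "{x. poly P x = 0} = {x::'a. x^N = 1}" unfolding P_def by (auto simp: poly_monom)
  ultimately have cR: "card {x::'a. x^N = 1} \<le> N" by simp
  have "card (Qset::'a set) = N" using Qcard[OF c3] j unfolding q_def N_def by simp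
  moreover have "card (Qset::'a set) \<le> card {x::'a. x^N = 1}" by (rule card_mono[OF _ QR]) simp
  ultimately have "card (Qset::'a set) = card {x::'a. x^N = 1}" using cR by linarith
  then have "Qset = {x::'a. x^N = 1}" using QR by (intro card_subset_eq) auto
  moreover have "(-1::'a)^N = 1" unfolding N_def by simp
  ultimately show ?thesis by blast
qed


lemma sum_split_add: "(\<Sum>j<k+n. g j) = (\<Sum>j<k. g j) + (\<Sum>j<n. g (k+j::nat))"
  by (induction n) (simp_all add: add.assoc)

lemma tr_double_anti:
  fixes z :: "'a::field"
  assumes "z^(3^k) = -z"
  shows "tr (k+k) z = 0"
proof -
  have "tr (k+k) z = (\<Sum>j<k. z^(3^j)) + (\<Sum>j<k. z^(3^(k+j)))" unfolding tr_def by (rule sum_split_add)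
  also have "(\<Sum>j<k. z^(3^(k+j))) = (\<Sum>j<k. -(z^(3^j)))"
    by (intro sum.cong refl) (simp add: power_add power_mult assms frob_neg)
  finally show ?thesis by (simp add: sum_negf)
qed

lemma tr_double_fix:
  fixes z :: "'a::field"
  assumes "z^(3^k) = z"
  shows "tr (k+k) z = 2 * tr k z"
proof -
  have "tr (k+k) z = (\<Sum>j<k. z^(3^j)) + (\<Sum>j<k. z^(3^(k+j)))" unfolding tr_def by (rule sum_split_add)
  also have "(\<Sum>j<k. z^(3^(k+j))) = (\<Sum>j<k. z^(3^j))"
    by (intro sum.cong refl) (simp add: power_add power_mult assms)
  finally show ?thesis unfolding tr_def by simp
qed


lemma N0_count:
  fixes dummy :: "'a::{field,finite}"
  assumes cq: "card (UNIV::'a set) = 3^(2*k)" and kodd: "odd k"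
  shows "card {y::'a. tr (2*k) (y^2) = 0} = 3^k + (3^k - 1) * 3^(k-1)"
proof -
  have k1: "k \<ge> 1" using kodd by (cases k) auto
  have c3: "(3::'a) = 0" using char3[OF cq] .
  have two: "(2::'a) = -1" 
  proof -
    have "(2::'a) = 3 - 1" by simp
    then show ?thesis using c3 by simp
  qed
  have "(-1::'a) \<in> Qset" by (rule minus_one_sq[OF cq k1])
  then have "\<exists>y::'a. -1 = y^2" unfolding Qset_def by simp
  then obtain i :: 'a where i2': "-1 = i^2" by blast
  then have i2: "i^2 = -1" by simp
  have inz: "i \<noteq> 0" using i2 by auto
  define q0 :: nat where "q0 = 3^k"
  define \<sigma> :: "'a \<Rightarrow> 'a" where "\<sigma> x = x^q0" for x
  define K where "K = {x::'a. \<sigma> x = x}"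
  have sadd: "\<sigma> (x+y) = \<sigma> x + \<sigma> y" for x y unfolding \<sigma>_def q0_def by (rule frobn[OF c3])
  have smul: "\<sigma> (x*y) = \<sigma> x * \<sigma> y" for x y unfolding \<sigma>_def by (simp add: power_mult_distrib)
  have sneg: "\<sigma> (-x) = - \<sigma> x" for x unfolding \<sigma>_def q0_def by (rule frob_neg)
  have sdiff: "\<sigma> (x-y) = \<sigma> x - \<sigma> y" for x y using sadd[of x "-y"] sneg[of y] by simp
  have sdiv: "\<sigma> (x/y) = \<sigma> x / \<sigma> y" for x y unfolding \<sigma>_def by (simp add: power_divide)
  have s1: "\<sigma> 1 = 1" unfolding \<sigma>_def by simp
  have s2: "\<sigma> 2 = 2" unfolding two using sneg[of 1] s1 by simp
  have ss: "\<sigma> (\<sigma> x) = x" for x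
  proof -
    have "\<sigma> (\<sigma> x) = x^(3^(2*k))" unfolding \<sigma>_def q0_def by (simp add: power_mult[symmetric] power_add mult_2)
    also have "\<dots> = x" using fermat[of x] cq by simp
    finally show ?thesis .
  qed
  have si: "\<sigma> i = -i"
  proof -
    have "(3::nat)^k mod 4 = 3" using kodd
    proof (induction k rule: nat_less_induct)
      case (1 n)
      then obtain t where t: "n = Suc (2*t)" by (metis oddE Suc_eq_plus1 add.commute)
      have "(3::nat)^n = 3 * 9^t" using t by (simp add: power_mult)
      moreover have "(9::nat)^t mod 4 = 1" by (induction t) (auto simp: mod_mult_right_eq[of 9, symmetric])
      ultimately show ?case by (simp add: mod_mult_right_eq[of 3, symmetric])
    qed
    then have "q0 = 4 * (q0 div 4) + 3" unfolding q0_def using div_mult_mod_eq[of "(3::nat)^k" 4] by simp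
    then have "i^q0 = (i^4)^(q0 div 4) * i^3" by (metis power_add power_mult)
    also have "i^4 = 1"
    proof -
      have "i^4 = (i^2)^2" by (simp add: power_mult[symmetric])
      then show ?thesis using i2 by simp
    qed
    also have "i^3 = - i" using i2 by (simp add: power3_eq_cube power2_eq_square)
    finally show ?thesis unfolding \<sigma>_def by simp
  qed
  have Kc: "x \<in> K \<longleftrightarrow> \<sigma> x = x" for x unfolding K_def by simp
  have Kadd: "x \<in> K \<Longrightarrow> y \<in> K \<Longrightarrow> x + y \<in> K" for x y using sadd Kc by simp
  have Kmul: "x \<in> K \<Longrightarrow> y \<in> K \<Longrightarrow> x * y \<in> K" for x y using smul Kc by simp
  have Kneg: "x \<in> K \<Longrightarrow> - x \<in> K" for x using sneg Kc by simp
  have Kdiv: "x \<in> K \<Longrightarrow> y \<in> K \<Longrightarrow> x / y \<in> K" for x y using sdiv Kc by simp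
  have Kdiff: "x \<in> K \<Longrightarrow> y \<in> K \<Longrightarrow> x - y \<in> K" for x y using Kadd Kneg[of y] by (simp only: diff_conv_add_uminus)
  have K0: "0 \<in> K" using Kc unfolding \<sigma>_def q0_def by (simp add: power_0_left)
  have K2: "2 \<in> K" using Kc s2 by simp
  have tr_anti: "\<sigma> z = -z \<Longrightarrow> tr (2*k) z = 0" for z
    using tr_double_anti[of z k] unfolding \<sigma>_def q0_def mult_2 by simp
  have tr_fix: "z \<in> K \<Longrightarrow> tr (2*k) z = 2 * tr k z" for z
    using tr_double_fix[of z k] Kc unfolding \<sigma>_def q0_def mult_2 by simp
  define \<phi> :: "'a \<times> 'a \<Rightarrow> 'a" where "\<phi> p = snd p + i * (snd p + fst p)" for p
  have inj: "inj_on \<phi> (K \<times> K)"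
  proof (rule inj_onI)
    fix p p' assume p: "p \<in> K \<times> K" and p': "p' \<in> K \<times> K" and e: "\<phi> p = \<phi> p'"
    obtain h u where hu: "p = (h,u)" "h \<in> K" "u \<in> K" using p by auto
    obtain h' u' where hu': "p' = (h',u')" "h' \<in> K" "u' \<in> K" using p' by auto
    define w where "w = u + h"
    define w' where "w' = u' + h'"
    have wK: "\<sigma> w = w" "\<sigma> w' = w'" using Kadd hu hu' Kc unfolding w_def w'_def by auto
    have e1: "u + i * w = u' + i * w'" using e hu hu' unfolding \<phi>_def w_def w'_def by simp
    then have "\<sigma> (u + i * w) = \<sigma> (u' + i * w')" by simp
    then have e2: "u - i * w = u' - i * w'" using sadd smul si wK hu hu' Kc by simp
    have a1: "2 * u = (u + i*w) + (u - i*w)" by (simp add: algebra_simps mult_2)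
    have a2: "2 * u' = (u' + i*w') + (u' - i*w')" by (simp add: algebra_simps mult_2)
    have "2 * u = 2 * u'" unfolding a1 a2 e1 e2 ..
    then have uu: "u = u'" using two_ne[OF c3] by simp
    then have "w = w'" using e1 inz by simp
    then have "h = h'" using uu unfolding w_def w'_def by simp
    then show "p = p'" using uu hu hu' by simp
  qed
  have surj: "\<phi> ` (K \<times> K) = UNIV"
  proof (rule set_eqI, rule iffI)
    fix y :: 'a assume "y \<in> UNIV"
    define u where "u = -(y + \<sigma> y)"
    define w where "w = i * (y - \<sigma> y)"
    have "\<sigma> u = u" unfolding u_def by (simp only: sneg sadd ss add.commute)
    then have uK: "u \<in> K" using Kc by simp
    have "\<sigma> w = -i * (\<sigma> y - y)" unfolding w_def by (simp only: smul sdiff si ss)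
    also have "\<dots> = w" unfolding w_def by (simp add: algebra_simps)
    finally have wK: "w \<in> K" using Kc by simp
    have "\<phi> (w - u, u) = u + i * w" unfolding \<phi>_def by simp
    also have "\<dots> = -(y + \<sigma> y) + i^2 * (y - \<sigma> y)" unfolding u_def w_def by (simp add: power2_eq_square algebra_simps)
    also have "\<dots> = -(2*y)" using i2 by (simp add: algebra_simps)
    also have "\<dots> = y" using two by simp
    finally have "\<phi> (w - u, u) = y" .
    moreover have "(w - u, u) \<in> K \<times> K" using uK wK Kdiff by simp
    ultimately show "y \<in> \<phi> ` (K \<times> K)" by (metis image_eqI)
  qed simp
  have cKK: "card K * card K = q0 * q0"
  proof -
    have "card (K \<times> K) = card (UNIV::'a set)" using card_image[OF inj] surj by simp
    moreover have "(3::nat)^(2*k) = 3^k * 3^k" by (simp add: mult_2 power_add)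
    ultimately show ?thesis using cq unfolding q0_def by (simp add: card_cartesian_product)
  qed
  then have cK: "card K = q0" using power_inject_base[of "card K" 1 q0] by (simp add: power2_eq_square)
  have key: "tr (2*k) ((\<phi> (h,u))^2) = - tr (2*k) (2*u*h + h^2)" if hK: "h \<in> K" and uK: "u \<in> K" for h u
  proof -
    define w where "w = u + h"
    have wK: "\<sigma> w = w" using Kadd hK uK Kc unfolding w_def by auto
    have sq: "(\<phi> (h,u))^2 = u^2 + (- (w^2)) + (- (i*u*w))"
    proof -
      have "(\<phi> (h,u))^2 = u^2 + 2*(i*u*w) + i^2 * w^2" unfolding \<phi>_def w_def by (simp add: power2_eq_square algebra_simps)
      also have "\<dots> = u^2 + (- (w^2)) + (- (i*u*w))" unfolding two i2 by simp
      finally show ?thesis .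
    qed
    have z: "tr (2*k) (- (i*u*w)) = 0"
    proof (rule tr_anti)
      show "\<sigma> (- (i * u * w)) = - (- (i * u * w))" using sneg smul si wK uK Kc by simp
    qed
    have w2: "w^2 = u^2 + (2*u*h + h^2)" unfolding w_def by (simp add: power2_eq_square algebra_simps)
    have z': "tr (2*k) (i*u*w) = 0" using z tr_neg[of "2*k" "i*u*w"] by simp
    show ?thesis unfolding sq w2 by (simp only: tr_add[OF c3] tr_neg z') simp
  qed
  define A where "A = (SIGMA h:K. {u\<in>K. tr (2*k) (2*u*h + h^2) = 0})"
  have AKK: "A \<subseteq> K \<times> K" unfolding A_def by auto
  have setEq: "{y::'a. tr (2*k) (y^2) = 0} = \<phi> ` A"
  proof (rule set_eqI, rule iffI)
    fix y :: 'a assume y: "y \<in> {y. tr (2*k) (y^2) = 0}"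
    obtain p where p: "p \<in> K \<times> K" "y = \<phi> p" using surj by (metis UNIV_I imageE)
    obtain h u where hu: "p = (h,u)" "h \<in> K" "u \<in> K" using p by auto
    have "tr (2*k) (2*u*h + h^2) = 0" using key[OF hu(2,3)] y p hu by simp
    then have "p \<in> A" unfolding A_def using hu by simp
    then show "y \<in> \<phi> ` A" using p by simp
  next
    fix y assume "y \<in> \<phi> ` A"
    then obtain h u where hu: "h \<in> K" "u \<in> K" "tr (2*k) (2*u*h + h^2) = 0" "y = \<phi> (h,u)" unfolding A_def by auto
    then show "y \<in> {y. tr (2*k) (y^2) = 0}" using key[OF hu(1,2)] by simp
  qed
  have "card {y::'a. tr (2*k) (y^2) = 0} = card A"
    unfolding setEq by (rule card_image) (rule inj_on_subset[OF inj AKK])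
  also have "\<dots> = (\<Sum>h\<in>K. card {u\<in>K. tr (2*k) (2*u*h + h^2) = 0})"
    unfolding A_def by (rule card_SigmaI) auto
  also have "\<dots> = q0 + (q0 - 1) * 3^(k-1)"
  proof -
    have finK: "finite K" by (rule finite)
    have trK: "card {z\<in>K. tr k z = 0} = 3^(k-1)"
    proof (rule trace_kernel[OF c3 finK])
      show "x \<in> K \<Longrightarrow> y \<in> K \<Longrightarrow> x + y \<in> K" for x y by (rule Kadd)
      show "x \<in> K \<Longrightarrow> - x \<in> K" for x by (rule Kneg)
      show "z \<in> K \<Longrightarrow> z ^ 3 ^ k = z" for z using Kc unfolding \<sigma>_def q0_def by simp
      show "card K = 3^k" using cK q0_def by simp
      show "k \<ge> 1" by (rule k1)
    qed
    have trK2: "{z\<in>K. tr (2*k) z = 0} = {z\<in>K. tr k z = 0}" using tr_fix two_ne[OF c3] by auto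
    have hnz: "card {u\<in>K. tr (2*k) (2*u*h + h^2) = 0} = 3^(k-1)" if hK: "h \<in> K" and h0: "h \<noteq> 0" for h
    proof -
      have 2: "(2::'a) \<noteq> 0" by (rule two_ne[OF c3])
      have bij: "bij_betw (\<lambda>u. 2*u*h + h^2) {u\<in>K. tr (2*k) (2*u*h + h^2) = 0} {z\<in>K. tr (2*k) z = 0}"
      proof (rule bij_betw_byWitness[of _ "\<lambda>z. (z - h^2) / (2*h)"])
        show "\<forall>a\<in>{u \<in> K. tr (2 * k) (2 * u * h + h\<^sup>2) = 0}. (2 * a * h + h\<^sup>2 - h\<^sup>2) / (2 * h) = a"
          using 2 h0 by simp
        show "\<forall>a'\<in>{z \<in> K. tr (2 * k) z = 0}. 2 * ((a' - h\<^sup>2) / (2 * h)) * h + h\<^sup>2 = a'"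
          using 2 h0 by (simp add: field_simps)
        show "(\<lambda>u. 2 * u * h + h\<^sup>2) ` {u \<in> K. tr (2 * k) (2 * u * h + h\<^sup>2) = 0} \<subseteq> {z \<in> K. tr (2 * k) z = 0}"
        proof
          fix x assume "x \<in> (\<lambda>u. 2 * u * h + h\<^sup>2) ` {u \<in> K. tr (2 * k) (2 * u * h + h\<^sup>2) = 0}"
          then obtain u where u: "u \<in> K" "tr (2 * k) (2 * u * h + h\<^sup>2) = 0" "x = 2 * u * h + h\<^sup>2" by blast
          have "2 * u * h + h * h \<in> K" by (rule Kadd[OF Kmul[OF Kmul[OF K2 u(1)] hK] Kmul[OF hK hK]])
          then show "x \<in> {z \<in> K. tr (2 * k) z = 0}" using u by (simp add: power2_eq_square)
        qed
        show "(\<lambda>z. (z - h\<^sup>2) / (2 * h)) ` {z \<in> K. tr (2 * k) z = 0} \<subseteq> {u \<in> K. tr (2 * k) (2 * u * h + h\<^sup>2) = 0}"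
        proof
          fix x assume "x \<in> (\<lambda>z. (z - h\<^sup>2) / (2 * h)) ` {z \<in> K. tr (2 * k) z = 0}"
          then obtain z where z: "z \<in> K" "tr (2*k) z = 0" "x = (z - h^2) / (2*h)" by auto
          have "(z - h * h) / (2 * h) \<in> K" by (rule Kdiv[OF Kdiff[OF z(1) Kmul[OF hK hK]] Kmul[OF K2 hK]])
          then have "x \<in> K" unfolding z(3) by (simp add: power2_eq_square)
          moreover have "2*x*h + h^2 = z" unfolding z(3) using 2 h0 by (simp add: field_simps)
          ultimately show "x \<in> {u \<in> K. tr (2 * k) (2 * u * h + h\<^sup>2) = 0}" using z by simp
        qed
      qed
      then have "card {u\<in>K. tr (2*k) (2*u*h + h^2) = 0} = card {z\<in>K. tr (2*k) z = 0}" by (rule bij_betw_same_card)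
      then show ?thesis using trK trK2 by simp
    qed
    have h0: "{u\<in>K. tr (2*k) (2*u*0 + 0^2) = 0} = K" by (auto simp: power_0_left)
    have "(\<Sum>h\<in>K. card {u\<in>K. tr (2*k) (2*u*h + h^2) = 0})
        = card {u\<in>K. tr (2*k) (2*u*0 + 0^2) = 0} + (\<Sum>h\<in>K-{0}. card {u\<in>K. tr (2*k) (2*u*h + h^2) = 0})"
      using finK K0 by (rule sum.remove)
    also have "(\<Sum>h\<in>K-{0}. card {u\<in>K. tr (2*k) (2*u*h + h^2) = 0}) = (\<Sum>h\<in>K-{0}. 3^(k-1))"
      using hnz by (intro sum.cong) auto
    also have "\<dots> = (q0 - 1) * 3^(k-1)" using cK K0 by (simp add: card_Diff_singleton)
    finally show ?thesis using h0 cK by simp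
  qed
  finally show ?thesis unfolding q0_def .
qed


lemma sum_ind_card: "finite A \<Longrightarrow> (\<Sum>x\<in>A. if P x then 0 else (1::nat)) = card {x\<in>A. \<not> P x}"
proof -
  assume fA: "finite A"
  have "(\<Sum>x\<in>A. if P x then 0 else (1::nat)) = (\<Sum>x\<in>A. if \<not> P x then 1 else 0)"
    by (intro sum.cong) auto
  also have "\<dots> = (\<Sum>x\<in>{x\<in>A. \<not> P x}. 1)" using sum.inter_filter[OF fA, of "\<lambda>_. (1::nat)" "\<lambda>x. \<not> P x"] by simp
  finally show ?thesis by simp
qed

lemma inner_sum:
  fixes c b :: "'a::{field,finite}" assumes "c \<noteq> 0"
  shows "(\<Sum>x\<in>UNIV. if tr m (b + c*x) = 0 then 0 else (1::nat)) = card {x::'a. tr m x \<noteq> 0}"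
proof -
  have "(\<Sum>x\<in>UNIV. if tr m (b + c*x) = 0 then 0 else (1::nat)) = (\<Sum>y\<in>(UNIV::'a set). if tr m y = 0 then 0 else (1::nat))"
  proof -
    have bij: "bij_betw (\<lambda>x. b + c*x) (UNIV::'a set) UNIV"
    proof (rule bij_betw_byWitness[of _ "\<lambda>y. (y - b)/c"])
    qed (use assms in auto)
    show ?thesis using sum.reindex_bij_betw[OF bij, of "\<lambda>y. if tr m y = 0 then 0 else (1::nat)"] by simp
  qed
  also have "\<dots> = card {x::'a. tr m x \<noteq> 0}" by (subst sum_ind_card) auto
  finally show ?thesis .
qed

definition Ssum :: "nat \<Rightarrow> 'a::{field,finite} \<Rightarrow> 'a \<Rightarrow> 'a \<Rightarrow> nat" where
  "Ssum m c1 c2 c3 = (\<Sum>(x1,x2,x3)\<in>Qset \<times> UNIV \<times> UNIV. if tr m (c1*x1 + c2*x2 + c3*x3) = 0 then 0 else 1)"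

lemma Ssum_expand: "Ssum m c1 c2 c3 = (\<Sum>x1\<in>Qset. \<Sum>x2\<in>UNIV. \<Sum>x3\<in>UNIV. if tr m (c1*x1 + c2*x2 + c3*x3) = 0 then 0 else 1)"
  unfolding Ssum_def by (simp add: sum.cartesian_product)

lemma Ssum_3:
  fixes c1 c2 c3 :: "'a::{field,finite}" assumes "c3 \<noteq> 0"
  shows "Ssum m c1 c2 c3 = card (Qset::'a set) * card (UNIV::'a set) * card {x::'a. tr m x \<noteq> 0}"
proof -
  have "Ssum m c1 c2 c3 = (\<Sum>x1\<in>(Qset::'a set). \<Sum>x2\<in>(UNIV::'a set). card {x::'a. tr m x \<noteq> 0})"
    unfolding Ssum_expand using inner_sum[OF assms, of m] by simp
  then show ?thesis by simp
qed

lemma Ssum_2: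
  fixes c1 c2 :: "'a::{field,finite}" assumes "c2 \<noteq> 0"
  shows "Ssum m c1 c2 0 = card (Qset::'a set) * card (UNIV::'a set) * card {x::'a. tr m x \<noteq> 0}"
proof -
  have "Ssum m c1 c2 0 = (\<Sum>x1\<in>(Qset::'a set). \<Sum>x2\<in>(UNIV::'a set). card (UNIV::'a set) * (if tr m (c1*x1 + c2*x2) = 0 then 0 else 1))"
    unfolding Ssum_expand by simp
  also have "\<dots> = (\<Sum>x1\<in>(Qset::'a set). card (UNIV::'a set) * card {x::'a. tr m x \<noteq> 0})"
    by (simp add: sum_distrib_left[symmetric] inner_sum[OF assms])
  finally show ?thesis by simp
qed

lemma Ssum_1:
  fixes c1 :: "'a::{field,finite}"
  shows "Ssum m c1 0 0 = card (UNIV::'a set) * card (UNIV::'a set) * card {x\<in>(Qset::'a set). tr m (c1*x) \<noteq> 0}"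
proof -
  have "Ssum m c1 0 0 = (\<Sum>x1\<in>(Qset::'a set). card (UNIV::'a set) * card (UNIV::'a set) * (if tr m (c1*x1) = 0 then 0 else 1))"
    unfolding Ssum_expand by (simp add: mult.assoc)
  also have "\<dots> = card (UNIV::'a set) * card (UNIV::'a set) * (\<Sum>x1\<in>(Qset::'a set). (if tr m (c1*x1) = 0 then 0 else 1))"
    by (simp only: sum_distrib_left mult.assoc)
  also have "(\<Sum>x1\<in>(Qset::'a set). (if tr m (c1*x1) = 0 then 0 else (1::nat))) = card {x\<in>(Qset::'a set). tr m (c1*x) \<noteq> 0}"
    by (rule sum_ind_card) simp
  finally show ?thesis .
qed


lemma elem_eq: "elem x1 x2 x3 = (x1 - x2 + x3, x2 - 2*x3, (x3::'a::comm_ring_1))"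
  unfolding elem_def radd_def rmul_def rconst_def um1sq_def um1_def by (simp add: algebra_simps)

lemma elem_inj: "inj (\<lambda>(x1,x2,x3). elem x1 x2 (x3::'a::comm_ring_1))"
proof (rule injI)
  fix s t :: "'a \<times> 'a \<times> 'a"
  assume e: "(\<lambda>(x1,x2,x3). elem x1 x2 x3) s = (\<lambda>(x1,x2,x3). elem x1 x2 x3) t"
  obtain a b c where s: "s = (a,b,c)" by (cases s) auto
  obtain a' b' c' where t: "t = (a',b',c')" by (cases t) auto
  have "c = c'" "b - 2*c = b' - 2*c'" "a - b + c = a' - b' + c'" using e s t by (auto simp: elem_eq)
  then show "s = t" using s t by auto
qed

lemma Lprime_img: "(Lprime :: 'a::field R3 set) = (\<lambda>(x1,x2,x3). elem x1 x2 x3) ` (Qset \<times> UNIV \<times> UNIV)"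
proof
  show "(Lprime :: 'a R3 set) \<subseteq> (\<lambda>(x1,x2,x3). elem x1 x2 x3) ` (Qset \<times> UNIV \<times> UNIV)"
  proof
    fix y assume "y \<in> (Lprime :: 'a R3 set)"
    then obtain x1 x2 x3 where "y = elem x1 x2 x3" "x1 \<in> Qset" unfolding Lprime_def by blast
    then show "y \<in> (\<lambda>(x1,x2,x3). elem x1 x2 x3) ` (Qset \<times> UNIV \<times> UNIV)"
      by (intro rev_image_eqI[of "(x1,x2,x3)"]) auto
  qed
  show "(\<lambda>(x1,x2,x3). elem x1 x2 x3) ` (Qset \<times> UNIV \<times> UNIV) \<subseteq> (Lprime :: 'a R3 set)"
    unfolding Lprime_def by auto
qed

lemma lee_Tr: "lee_wt (Tr m (A,B,C)) = (if tr m A = 0 then 0 else 1) + (if tr m B = 0 then 0 else 1) + (if tr m C = 0 then 0 else 1)"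
  unfolding lee_wt_def Tr_def by simp

lemma wL_decomp:
  fixes p q r :: "'a::{field,finite}"
  shows "wL_ev m (p,q,r) = Ssum m p (r-p) (p+q-2*r) + Ssum m q (p-q) (q+r-2*p) + Ssum m r (q-r) (p+r-2*q)"
proof -
  let ?E = "\<lambda>(x1,x2,x3). elem x1 x2 (x3::'a)"
  have "wL_ev m (p,q,r) = (\<Sum>x\<in>?E ` (Qset \<times> UNIV \<times> UNIV). lee_wt (Tr m (rmul (p,q,r) x)))"
    unfolding wL_ev_def Lprime_img ..
  also have "\<dots> = (\<Sum>t\<in>Qset \<times> UNIV \<times> UNIV. lee_wt (Tr m (rmul (p,q,r) (?E t))))"
    by (rule sum.reindex[unfolded comp_def]) (rule inj_on_subset[OF elem_inj], simp)
  also have "\<dots> = (\<Sum>(x1,x2,x3)\<in>Qset \<times> UNIV \<times> UNIV.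
        (if tr m (p*x1 + (r-p)*x2 + (p+q-2*r)*x3) = 0 then 0 else 1)
      + (if tr m (q*x1 + (p-q)*x2 + (q+r-2*p)*x3) = 0 then 0 else 1)
      + (if tr m (r*x1 + (q-r)*x2 + (p+r-2*q)*x3) = 0 then 0 else 1))"
  proof (rule sum.cong[OF refl])
    fix t :: "'a \<times> 'a \<times> 'a"
    obtain x1 x2 x3 where t: "t = (x1,x2,x3)" by (cases t) auto
    have "rmul (p,q,r) (?E t) = (p*x1 + (r-p)*x2 + (p+q-2*r)*x3, q*x1 + (p-q)*x2 + (q+r-2*p)*x3, r*x1 + (q-r)*x2 + (p+r-2*q)*x3)"
      unfolding t by (simp add: elem_eq rmul_def algebra_simps)
    then show "lee_wt (Tr m (rmul (p,q,r) (?E t))) = (case t of (x1,x2,x3) \<Rightarrow>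
        (if tr m (p*x1 + (r-p)*x2 + (p+q-2*r)*x3) = 0 then 0 else 1)
      + (if tr m (q*x1 + (p-q)*x2 + (q+r-2*p)*x3) = 0 then 0 else 1)
      + (if tr m (r*x1 + (q-r)*x2 + (p+r-2*q)*x3) = 0 then 0 else 1))"
      unfolding t by (simp only: lee_Tr prod.case)
  qed
  also have "\<dots> = Ssum m p (r-p) (p+q-2*r) + Ssum m q (p-q) (q+r-2*p) + Ssum m r (q-r) (p+r-2*q)"
    unfolding Ssum_def by (simp add: sum.distrib case_prod_unfold)
  finally show ?thesis .
qed

lemma Qmul: "c \<in> Qset \<Longrightarrow> x \<in> Qset \<Longrightarrow> c * x \<in> (Qset::'a::field set)"
  unfolding Qset_def by (auto simp: power_mult_distrib[symmetric])

lemma Qdiv: "c \<in> Qset \<Longrightarrow> x \<in> Qset \<Longrightarrow> x / c \<in> (Qset::'a::field set)"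
  unfolding Qset_def by (auto simp: power_divide[symmetric])

lemma QNmul: assumes "c \<in> Nset" "x \<in> Qset" shows "c * x \<in> (Nset::'a::field set)"
proof -
  obtain y where y: "x = y^2" "y \<noteq> 0" using assms(2) unfolding Qset_def by auto
  have "\<not> (\<exists>z. c * x = z^2)"
  proof
    assume "\<exists>z. c * x = z^2"
    then obtain z where "c * x = z^2" by blast
    then have "c = (z/y)^2" using y by (simp add: power_divide field_simps)
    then show False using assms(1) unfolding Nset_def by blast
  qed
  then show ?thesis unfolding Nset_def by simp
qed

lemma NQ_partition: "UNIV - {0} = Qset \<union> (Nset::'a::field set)" "Qset \<inter> (Nset::'a set) = {}" "(0::'a) \<notin> Nset"
  unfolding Qset_def Nset_def by (auto simp: power_0_left)

lemma Ncard:
  fixes dummy :: "'a::{field,finite}" assumes c3: "(3::'a) = 0"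
  shows "card (Nset::'a set) = card (Qset::'a set)"
proof -
  have "card (UNIV - {0::'a}) = card (UNIV::'a set) - 1" by (rule card_Diff_singleton) simp
  moreover have "card (UNIV - {0::'a}) = card (Qset::'a set) + card (Nset::'a set)"
    unfolding NQ_partition(1) by (rule card_Un_disjoint) (simp_all add: NQ_partition(2))
  ultimately show ?thesis using Qcard[OF c3] by simp
qed

lemma cntQ:
  fixes c :: "'a::{field,finite}" assumes "c \<in> Qset"
  shows "card {x\<in>Qset. tr m (c*x) \<noteq> 0} = card {x\<in>(Qset::'a set). tr m x \<noteq> 0}"
proof -
  have c0: "c \<noteq> 0" using assms unfolding Qset_def by auto
  have "bij_betw (\<lambda>x. c*x) {x\<in>Qset. tr m (c*x) \<noteq> 0} {x\<in>(Qset::'a set). tr m x \<noteq> 0}"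
  proof (rule bij_betw_byWitness[of _ "\<lambda>y. y / c"])
  qed (use c0 Qmul[OF assms] Qdiv[OF assms] in auto)
  then show ?thesis by (rule bij_betw_same_card)
qed

lemma cntN:
  fixes c :: "'a::{field,finite}" assumes c3: "(3::'a) = 0" and cN: "c \<in> Nset"
  shows "card {x\<in>Qset. tr m (c*x) \<noteq> 0} = card {x\<in>(Nset::'a set). tr m x \<noteq> 0}"
proof -
  have c0: "c \<noteq> 0" using cN NQ_partition(3) by auto
  have inj: "inj_on (\<lambda>x. c*x) A" for A :: "'a set" using c0 by (auto simp: inj_on_def)
  have sub: "(\<lambda>x. c*x) ` Qset \<subseteq> Nset" using QNmul[OF cN] by auto
  have "card ((\<lambda>x. c*x) ` Qset) = card (Nset::'a set)" using card_image[OF inj] Ncard[OF c3] by simp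
  then have img: "(\<lambda>x. c*x) ` Qset = Nset" using sub by (intro card_subset_eq) auto
  have "(\<lambda>x. c*x) ` {x\<in>Qset. tr m (c*x) \<noteq> 0} = {x\<in>(Nset::'a set). tr m x \<noteq> 0}"
  proof
    show "(\<lambda>x. c*x) ` {x\<in>Qset. tr m (c*x) \<noteq> 0} \<subseteq> {x\<in>(Nset::'a set). tr m x \<noteq> 0}" using sub by auto
    show "{x\<in>(Nset::'a set). tr m x \<noteq> 0} \<subseteq> (\<lambda>x. c*x) ` {x\<in>Qset. tr m (c*x) \<noteq> 0}"
    proof
      fix y assume y: "y \<in> {x\<in>(Nset::'a set). tr m x \<noteq> 0}"
      then obtain x where "x \<in> Qset" "y = c*x" using img by (metis (mono_tags, lifting) imageE mem_Collect_eq)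
      then show "y \<in> (\<lambda>x. c*x) ` {x\<in>Qset. tr m (c*x) \<noteq> 0}" using y by auto
    qed
  qed
  then show ?thesis using card_image[OF inj] by metis
qed


theorem theorem5p2:
  fixes m :: nat and a :: "'a::{field,finite} R3"
  assumes "card (UNIV :: 'a set) = 3 ^ m"
    and "m mod 4 = 2"
  shows "(a = (0,0,0) \<longrightarrow> wL_ev m a = 0)
    \<and> (\<forall>a3. a = rmul um1sq (rconst a3) \<longrightarrow>
          (a3 \<in> Qset \<longrightarrow> int (wL_ev m a) = 3 ^ (3*m) - 3 ^ (5*m div 2))
        \<and> (a3 \<in> Nset \<longrightarrow> int (wL_ev m a) = 3 ^ (3*m) + 3 ^ (5*m div 2)))
    \<and> (a \<notin> ideal_um1sq \<longrightarrow> int (wL_ev m a) = 3 ^ (3*m) - 3 ^ (2*m))"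
proof -
  have c3: "(3::'a) = 0" by (rule char3[OF assms(1)])
  have two: "(2::'a) = -1"
  proof -
    have "(2::'a) = 3 - 1" by simp
    then show ?thesis using c3 by simp
  qed
  define k where "k = m div 2"
  have mk: "m = 2*k" unfolding k_def using assms(2) by presburger
  have kodd: "odd k" unfolding k_def using assms(2) by presburger
  have k1: "k \<ge> 1" using kodd by (cases k) auto
  have cq: "card (UNIV::'a set) = 3^(2*k)" using assms(1) mk by simp
  define t :: nat where "t = 3^(k-1)"
  have t3: "(3::nat)^k = 3*t" unfolding t_def using k1 by (simp add: power_eq_if)
  define q where "q = card (UNIV::'a set)"
  have qt: "q = 9*t^2" unfolding q_def cq by (simp add: mult_2 power_add t3 power2_eq_square)
  have ker: "card {z\<in>(UNIV::'a set). tr m z = 0} = 3^(m-1)"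
  proof (rule trace_kernel[OF c3])
    show "finite (UNIV::'a set)" by simp
    show "z^(3^m) = z" for z :: 'a using fermat[of z] assms(1) by simp
  qed (use assms(1) mk k1 in auto)
  have m1: "(3::nat)^(m-1) = 3*t^2"
  proof -
    have "(3::nat)^(m-1) = 3^k * 3^(k-1)" using mk k1 by (simp add: power_add[symmetric])
    then show ?thesis using t3 t_def by (simp add: power2_eq_square)
  qed
  define T where "T = card {x::'a. tr m x \<noteq> 0}"
  have Tv: "T = 6*t^2"
  proof -
    have "{x::'a. tr m x \<noteq> 0} = UNIV - {z\<in>(UNIV::'a set). tr m z = 0}" by auto
    then have "T = q - 3^(m-1)" unfolding T_def q_def using ker by (simp add: card_Diff_subset)
    then show ?thesis using qt m1 by simp
  qed
  define N0 where "N0 = card {y::'a. tr m (y^2) = 0}"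
  have N0v: "N0 = 3*t + (3*t - 1)*t" unfolding N0_def mk using N0_count[OF cq kodd] t3 t_def by simp
  define A where "A = card {x\<in>(Qset::'a set). tr m x \<noteq> 0}"
  have A2: "2*A + N0 = q"
  proof -
    have "card {y::'a. y \<noteq> 0 \<and> tr m (y^2) \<noteq> 0} = 2 * A" unfolding A_def by (rule sq_count[OF c3])
    moreover have "{y::'a. y \<noteq> 0 \<and> tr m (y^2) \<noteq> 0} = UNIV - {y::'a. tr m (y^2) = 0}"
      by (auto simp: power_0_left)
    moreover have "card (UNIV - {y::'a. tr m (y^2) = 0}) + N0 = q"
    proof -
      have "card (UNIV - {y::'a. tr m (y^2) = 0}) = card (UNIV::'a set) - card {y::'a. tr m (y^2) = 0}"
        by (rule card_Diff_subset) auto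
      moreover have "card {y::'a. tr m (y^2) = 0} \<le> card (UNIV::'a set)" by (rule card_mono) auto
      ultimately show ?thesis unfolding N0_def q_def by linarith
    qed
    ultimately show ?thesis by metis
  qed
  define B where "B = card {x\<in>(Nset::'a set). tr m x \<noteq> 0}"
  have AB: "A + B = T"
  proof -
    have "{x::'a. tr m x \<noteq> 0} = {x\<in>Qset. tr m x \<noteq> 0} \<union> {x\<in>Nset. tr m x \<noteq> 0}"
    proof -
      have "x \<in> Qset \<or> x \<in> Nset" if "x \<noteq> 0" for x :: 'a
        using NQ_partition(1) that by (metis DiffI UNIV_I UnE singletonD)
      then show ?thesis by (auto simp del: tr_zero) (metis tr_zero)
    qed
    moreover have "card ({x\<in>(Qset::'a set). tr m x \<noteq> 0} \<union> {x\<in>Nset. tr m x \<noteq> 0}) = A + B"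
      unfolding A_def B_def by (rule card_Un_disjoint) (use NQ_partition(2) in auto)
    ultimately show ?thesis unfolding T_def by simp
  qed
  define Qc where "Qc = card (Qset::'a set)"
  have Qv: "2*Qc + 1 = q" unfolding Qc_def q_def using Qcard[OF c3] assms(1) by simp
  have pos: "t \<ge> 1" unfolding t_def by simp
  have e3m: "(3::int)^(3*m) = (3*int t)^6"
  proof -
    have "3*m = k*6" unfolding mk by simp
    then have "(3::int)^(3*m) = (3^k)^6" by (simp only: power_mult)
    also have "(3::int)^k = 3 * int t" using t3 by (metis of_nat_numeral of_nat_mult of_nat_power)
    finally show ?thesis .
  qed
  have e5: "(3::int)^(5*m div 2) = (3*int t)^5"
  proof -
    have "5*m div 2 = k*5" unfolding mk by simp
    then have "(3::int)^(5*m div 2) = (3^k)^5" by (simp only: power_mult)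
    also have "(3::int)^k = 3 * int t" using t3 by (metis of_nat_numeral of_nat_mult of_nat_power)
    finally show ?thesis .
  qed
  have e2m: "(3::int)^(2*m) = (3*int t)^4"
  proof -
    have "2*m = k*4" unfolding mk by simp
    then have "(3::int)^(2*m) = (3^k)^4" by (simp only: power_mult)
    also have "(3::int)^k = 3 * int t" using t3 by (metis of_nat_numeral of_nat_mult of_nat_power)
    finally show ?thesis .
  qed
  have iq: "int q = 9 * (int t)^2" using qt by simp
  have iT: "int T = 6 * (int t)^2" using Tv by simp
  have iN0: "int N0 = 3 * int t + (3 * int t - 1) * int t" using N0v pos by (simp add: of_nat_diff)
  have iA: "int A = 3 * (int t)^2 - int t"
  proof -
    have "2 * int A + int N0 = int q" using A2 by linarith
    then have "2 * int A = 9 * (int t)^2 - (3 * int t + (3 * int t - 1) * int t)" using iq iN0 by simp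
    then show ?thesis by (simp add: algebra_simps power2_eq_square)
  qed
  have iB: "int B = 3 * (int t)^2 + int t" using AB iA iT by linarith
  have iQ: "2 * int Qc = 9 * (int t)^2 - 1" using Qv iq by linarith
  have ca: "a = (0,0,0) \<longrightarrow> wL_ev m a = 0"
  proof
    assume a0: "a = (0,0,0)"
    have "rmul a x = (0,0,0)" for x using a0 by (cases x) (simp add: rmul_def)
    then show "wL_ev m a = 0" unfolding wL_ev_def by (simp add: lee_wt_def Tr_def)
  qed
  have cb: "\<forall>a3. a = rmul um1sq (rconst a3) \<longrightarrow>
          (a3 \<in> Qset \<longrightarrow> int (wL_ev m a) = 3 ^ (3*m) - 3 ^ (5*m div 2))
        \<and> (a3 \<in> Nset \<longrightarrow> int (wL_ev m a) = 3 ^ (3*m) + 3 ^ (5*m div 2))"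
  proof (intro allI impI)
    fix a3 assume "a = rmul um1sq (rconst a3)"
    then have aa: "a = (a3, a3, a3)" unfolding um1sq_def um1_def rmul_def rconst_def by (simp add: two)
    have w: "wL_ev m a = 3 * (q * q * card {x\<in>(Qset::'a set). tr m (a3*x) \<noteq> 0})"
      unfolding aa wL_decomp Ssum_1[symmetric] q_def by simp
    show "(a3 \<in> Qset \<longrightarrow> int (wL_ev m a) = 3 ^ (3*m) - 3 ^ (5*m div 2))
        \<and> (a3 \<in> Nset \<longrightarrow> int (wL_ev m a) = 3 ^ (3*m) + 3 ^ (5*m div 2))"
    proof (intro conjI impI)
      assume aQ: "a3 \<in> Qset"
      have "int (wL_ev m a) = 3 * int q * int q * int A" unfolding w A_def using cntQ[OF aQ, of m] by simp
      then show "int (wL_ev m a) = 3 ^ (3*m) - 3 ^ (5*m div 2)" unfolding e3m e5 using iq iA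
        by (simp add: algebra_simps power2_eq_square power3_eq_cube power_eq_if eval_nat_numeral)
    next
      assume aN: "a3 \<in> Nset"
      have "int (wL_ev m a) = 3 * int q * int q * int B" unfolding w B_def using cntN[OF c3 aN, of m] by simp
      then show "int (wL_ev m a) = 3 ^ (3*m) + 3 ^ (5*m div 2)" unfolding e3m e5 using iq iB
        by (simp add: algebra_simps power2_eq_square power3_eq_cube power_eq_if eval_nat_numeral)
    qed
  qed
  have gen: "Ssum m c1 c2 c3 = Qc * q * T" if "c3 \<noteq> 0 \<or> (c3 = 0 \<and> c2 \<noteq> 0)" for c1 c2 c3 :: 'a
  proof (cases "c3 = 0")
    case True
    then have "c2 \<noteq> 0" using that by simp
    then show ?thesis using Ssum_2[of c2 m c1] True unfolding Qc_def q_def T_def by simp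
  next
    case False
    then show ?thesis using Ssum_3[of c3 m c1 c2] unfolding Qc_def q_def T_def by simp
  qed
  have cc: "a \<notin> ideal_um1sq \<longrightarrow> int (wL_ev m a) = 3 ^ (3*m) - 3 ^ (2*m)"
  proof
    assume nI: "a \<notin> ideal_um1sq"
    obtain p1 p2 p3 where a: "a = (p1,p2,p3)" by (cases a) auto
    have neq: "\<not> (p1 = p2 \<and> p2 = p3)"
    proof
      assume "p1 = p2 \<and> p2 = p3"
      then have "a = rmul um1sq (rconst p1)" unfolding a um1sq_def um1_def rmul_def rconst_def by (simp add: two)
      then show False using nI unfolding ideal_um1sq_def by blast
    qed
    have s1: "p1 + p2 - 2*p3 = p1 + p2 + p3" "p2 + p3 - 2*p1 = p1 + p2 + p3" "p1 + p3 - 2*p2 = p1 + p2 + p3"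
      unfolding two by (simp_all add: algebra_simps)
    have cond: "(p1 + p2 + p3 \<noteq> 0) \<or> (p1 + p2 + p3 = 0 \<and> p3 - p1 \<noteq> 0 \<and> p1 - p2 \<noteq> 0 \<and> p2 - p3 \<noteq> 0)"
    proof (cases "p1 + p2 + p3 = 0")
      case True
      have "p3 - p1 \<noteq> 0"
      proof
        assume "p3 - p1 = 0"
        then have "p3 = p1" by simp
        then have "p2 = p1" using True two by (metis add.commute add_diff_cancel_right' diff_minus_eq_add mult_2 mult_minus_left mult_1 add_uminus_conv_diff minus_minus eq_neg_iff_add_eq_0 add.assoc)
        then show False using neq \<open>p3 = p1\<close> by simp
      qed
      moreover have "p1 - p2 \<noteq> 0"
      proof
        assume "p1 - p2 = 0"
        then have "p1 = p2" by simp
        then have "p3 = p1" using True two by (metis add.commute add_diff_cancel_right' diff_minus_eq_add mult_2 mult_minus_left mult_1 add_uminus_conv_diff minus_minus eq_neg_iff_add_eq_0 add.assoc)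
        then show False using neq \<open>p1 = p2\<close> by simp
      qed
      moreover have "p2 - p3 \<noteq> 0"
      proof
        assume "p2 - p3 = 0"
        then have "p2 = p3" by simp
        then have "p1 = p2" using True two by (metis add.commute add_diff_cancel_right' diff_minus_eq_add mult_2 mult_minus_left mult_1 add_uminus_conv_diff minus_minus eq_neg_iff_add_eq_0 add.assoc)
        then show False using neq \<open>p2 = p3\<close> by simp
      qed
      ultimately show ?thesis using True by simp
    qed simp
    have "wL_ev m a = 3 * (Qc * q * T)"
      unfolding a wL_decomp s1 using gen cond by auto
    then have "int (wL_ev m a) = 3 * int Qc * int q * int T" by simp
    also have "\<dots> = 81 * (int t)^4 * (2*int Qc)" using iq iT by (simp add: algebra_simps power2_eq_square eval_nat_numeral)
    also have "\<dots> = 81 * (int t)^4 * (9*(int t)^2 - 1)" using iQ by simp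
    also have "\<dots> = (3*int t)^6 - (3*int t)^4" by (simp add: algebra_simps eval_nat_numeral)
    finally show "int (wL_ev m a) = 3 ^ (3*m) - 3 ^ (2*m)" unfolding e3m e2m .
  qed
  show ?thesis using ca cb cc by blast
qed


end
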